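(* Let $0\le\ell\le r$ and let $a_1,b_1,\dots,a_s,b_s\ge0$ be integers with $\sum_{i=1}^s a_i+\sum_{i=1}^s b_i=\ell$. Put $k=\sum_{i=1}^s a_i$. Then the ideal $S^{a_1}L^{b_1}S^{a_2}L^{b_2}\cdots S^{a_s}L^{b_s}(p)\subseteq R_\ell$ (operators applied successively starting from $(p)=p\mathbb{Z}\subseteq R_0$) depends only on $k$, and $$S^{a_1}L^{b_1}\cdots S^{a_s}L^{b_s}(p)=S^kL^{\ell-k}(p)=L^{\ell-k}S^k(p)=J_{\ell,0}(p^{k+1}).$$
   Context: Fix a prime $p$ and an integer $r\ge0$. For $0\le k\le r$ let $R_k$ be the commutative ring which is free as a $\mathbb{Z}$-module with basis $X_{k,0},\dots,X_{k,k}$ and multiplication $X_{k,i}X_{k,j}=p^{k-\max(i,j)}X_{k,\min(i,j)}$; thus $X_{k,k}=1$, and an integer $n$ is identified with $nX_{k,k}$. For $0\le k\le\ell\le r$ define: the additive map $\mathrm{ind}^\ell_k:R_k\to R_\ell$, $X_{k,i}\mapsto X_{\ell,i}$; the ring homomorphism $\mathrm{res}^\ell_k:R_\ell\to R_k$, $\mathrm{res}^\ell_k(X_{\ell,i})=p^{\ell-k}X_{k,i}$ if $i\le k$ and $=p^{\ell-i}$ if $i\ge k$; and the multiplicative map $\mathrm{jnd}^\ell_k:R_k\to R_\ell$, $$\mathrm{jnd}^\ell_k\Big(\sum_{i=0}^k m_iX_{k,i}\Big)=m_kX_{\ell,\ell}+\sum_{k\le i<\ell}\frac{m_k^{p^{\ell-i}}-m_k^{p^{\ell-i-1}}}{p^{\ell-i}}X_{\ell,i}+\sum_{0\le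 i<k}\frac{(\sum_{s=i}^k m_sp^{k-s})^{p^{\ell-k}}-(\sum_{s=i+1}^k m_sp^{k-s})^{p^{\ell-k}}}{p^{\ell-i}}X_{\ell,i}$$ ($m_i\in\mathbb{Z}$). For $1\le k\le r$ and an ideal $I\subseteq R_{k-1}$: $L(I)=(\mathrm{res}^k_{k-1})^{-1}(I)\subseteq R_k$, and $S(I)$ is the ideal of $R_k$ generated by $\mathrm{ind}^k_{k-1}(I)\cup\mathrm{jnd}^k_{k-1}(I)$; $L^n,S^n$ are iterates (each step raising the index by one). For $0\le i\le\ell$, $F_{\ell,i}=X_{\ell,i}-p^{\ell-i}$; for $0\le k\le\ell$ and $x\in\mathbb{Z}$, $J_{\ell,k}(x)\subseteq R_\ell$ is the ideal generated by $x,F_{\ell,k},\dots,F_{\ell,\ell-1}$ if $k\le\ell-1$, and $J_{\ell,\ell}(x)=xR_\ell$. *)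

theory Defs
  imports Main "HOL-Computational_Algebra.Primes"
begin

text \<open>Elements of R_k are represented as coefficient functions x :: nat => int,
  x i being the coefficient of X_{k,i}; they must vanish above k.\<close>

definition carrier_R :: "nat \<Rightarrow> (nat \<Rightarrow> int) set" where
  "carrier_R k = {x. \<forall>m>k. x m = 0}"

definition basisX :: "nat \<Rightarrow> nat \<Rightarrow> nat \<Rightarrow> int" where
  "basisX k i = (\<lambda>m. if m = i \<and> i \<le> k then 1 else 0)"

text \<open>The integer n viewed as n X_{k,k}.\<close>
definition constR :: "nat \<Rightarrow> int \<Rightarrow> nat \<Rightarrow> int" where
  "constR k n = (\<lambda>m. if m = k then n else 0)"

definition addR :: "(nat \<Rightarrow> int) \<Rightarrow> (nat \<Rightarrow> int) \<Rightarrow> nat \<Rightarrow> int" where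
  "addR x y = (\<lambda>m. x m + y m)"

text \<open>Multiplication determined by X_{k,i} X_{k,j} = p^(k - max i j) X_{k, min i j}.\<close>
definition mulR :: "nat \<Rightarrow> nat \<Rightarrow> (nat \<Rightarrow> int) \<Rightarrow> (nat \<Rightarrow> int) \<Rightarrow> nat \<Rightarrow> int" where
  "mulR p k x y = (\<lambda>m. \<Sum>i\<le>k. \<Sum>j\<le>k.
      if min i j = m then x i * y j * int p ^ (k - max i j) else 0)"

definition is_idealR :: "nat \<Rightarrow> nat \<Rightarrow> (nat \<Rightarrow> int) set \<Rightarrow> bool" where
  "is_idealR p k I \<longleftrightarrow> I \<subseteq> carrier_R k \<and> (\<lambda>m. 0) \<in> I
     \<and> (\<forall>x\<in>I. \<forall>y\<in>I. addR x y \<in> I)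
     \<and> (\<forall>x\<in>I. \<forall>y\<in>carrier_R k. mulR p k y x \<in> I)"

definition gen_idealR :: "nat \<Rightarrow> nat \<Rightarrow> (nat \<Rightarrow> int) set \<Rightarrow> (nat \<Rightarrow> int) set" where
  "gen_idealR p k A = \<Inter>{I. is_idealR p k I \<and> A \<subseteq> I}"

definition indR :: "nat \<Rightarrow> nat \<Rightarrow> (nat \<Rightarrow> int) \<Rightarrow> nat \<Rightarrow> int" where
  "indR k l x = (\<lambda>m. if m \<le> k then x m else 0)"

definition resX :: "nat \<Rightarrow> nat \<Rightarrow> nat \<Rightarrow> nat \<Rightarrow> nat \<Rightarrow> int" where
  "resX p l k i = (if i \<le> k then (\<lambda>m. int p ^ (l - k) * basisX k i m)
                   else constR k (int p ^ (l - i)))"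

definition resR :: "nat \<Rightarrow> nat \<Rightarrow> nat \<Rightarrow> (nat \<Rightarrow> int) \<Rightarrow> nat \<Rightarrow> int" where
  "resR p l k x = (\<lambda>m. \<Sum>i\<le>l. x i * resX p l k i m)"

text \<open>jnd^l_k (the divisions are exact; integer division is used).\<close>
definition jndR :: "nat \<Rightarrow> nat \<Rightarrow> nat \<Rightarrow> (nat \<Rightarrow> int) \<Rightarrow> nat \<Rightarrow> int" where
  "jndR p k l x = (\<lambda>m.
     if m = l then x k
     else if k \<le> m \<and> m < l then
       (x k ^ (p ^ (l - m)) - x k ^ (p ^ (l - m - 1))) div (int p ^ (l - m))
     else if m < k then
       ((\<Sum>s\<in>{m..k}. x s * int p ^ (k - s)) ^ (p ^ (l - k))
        - (\<Sum>s\<in>{m+1..k}. x s * int p ^ (k - s)) ^ (p ^ (l - k))) div (int p ^ (l - m))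
     else 0)"

text \<open>For 1 <= k and an ideal I of R_{k-1}: L(I) and S(I), ideals of R_k.\<close>
definition Lop :: "nat \<Rightarrow> nat \<Rightarrow> (nat \<Rightarrow> int) set \<Rightarrow> (nat \<Rightarrow> int) set" where
  "Lop p k I = {x \<in> carrier_R k. resR p k (k - 1) x \<in> I}"

definition Sop :: "nat \<Rightarrow> nat \<Rightarrow> (nat \<Rightarrow> int) set \<Rightarrow> (nat \<Rightarrow> int) set" where
  "Sop p k I = gen_idealR p k (indR (k - 1) k ` I \<union> jndR p (k - 1) k ` I)"

datatype opSL = OpS | OpL

definition apply_op :: "nat \<Rightarrow> opSL \<Rightarrow> nat \<Rightarrow> (nat \<Rightarrow> int) set \<Rightarrow> (nat \<Rightarrow> int) set" where
  "apply_op p op1 k I = (case op1 of OpS \<Rightarrow> Sop p k I | OpL \<Rightarrow> Lop p k I)"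

definition pideal :: "nat \<Rightarrow> (nat \<Rightarrow> int) set" where
  "pideal p = {constR 0 (int p * n) | n. True}"

text \<open>A word o_1 o_2 ... o_n of operators, read as a composition (rightmost applied
  first) to (p); the result is an ideal of R_n.\<close>
fun word_ideal :: "nat \<Rightarrow> opSL list \<Rightarrow> (nat \<Rightarrow> int) set" where
  "word_ideal p [] = pideal p"
| "word_ideal p (op1 # w) = apply_op p op1 (Suc (length w)) (word_ideal p w)"

definition SL_word :: "nat list \<Rightarrow> nat list \<Rightarrow> opSL list" where
  "SL_word a b = concat (map (\<lambda>(ai, bi). replicate ai OpS @ replicate bi OpL) (zip a b))"

definition F_el :: "nat \<Rightarrow> nat \<Rightarrow> nat \<Rightarrow> nat \<Rightarrow> int" where
  "F_el p l i = (\<lambda>m. basisX l i m - constR l (int p ^ (l - i)) m)"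

definition J_ideal :: "nat \<Rightarrow> nat \<Rightarrow> nat \<Rightarrow> int \<Rightarrow> (nat \<Rightarrow> int) set" where
  "J_ideal p l k x = (if k \<le> l - 1 \<and> k < l
     then gen_idealR p l (insert (constR l x) {F_el p l i | i. k \<le> i \<and> i \<le> l - 1})
     else {mulR p l (constR l x) y | y. y \<in> carrier_R l})"

end

theory Submission
  imports Defs "HOL-Number_Theory.Number_Theory"
begin

lemma fermat_int:
  assumes "prime p"
  shows "int p dvd x ^ p - x"
proof (cases "int p dvd x")
  case True
  have "p > 0" using assms prime_gt_0_nat by blast
  then have "int p dvd x ^ p" using True by (metis dvd_power dvd_trans)
  then show ?thesis using True by simp
next
  case False
  have pp: "int p > 0" using assms prime_gt_0_nat by simp
  define a where "a = nat (x mod int p)"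
  have xa: "[x = int a] (mod int p)" unfolding a_def using pp
    by (simp add: cong_def)
  have "\<not> p dvd a"
  proof
    assume "p dvd a"
    then have "int p dvd int a" by simp
    then have "int p dvd x" using xa by (simp add: cong_dvd_iff)
    then show False using False by simp
  qed
  then have "[a ^ (p - 1) = 1] (mod p)" using fermat_theorem assms by blast
  then have "[int a ^ (p - 1) = 1] (mod int p)"
    by (metis cong_int_iff of_nat_1 of_nat_power)
  then have "[int a ^ (p - 1) * int a = 1 * int a] (mod int p)" by (rule cong_mult) simp
  moreover have "int a ^ (p - 1) * int a = int a ^ p"
    using assms prime_gt_0_nat by (simp add: power_eq_if)
  ultimately have "[int a ^ p = int a] (mod int p)" by simp
  then have "[x ^ p = x] (mod int p)"
    by (meson cong_pow cong_sym cong_trans xa)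
  then show ?thesis by (simp add: cong_iff_dvd_diff)
qed

lemma pow_p_lift:
  fixes a b :: int
  assumes "prime p" "e \<ge> 1" "int p ^ e dvd a - b"
  shows "int p ^ (Suc e) dvd a ^ p - b ^ p"
proof -
  have "a ^ p - b ^ p = (a - b) * (\<Sum>i<p. b ^ (p - Suc i) * a ^ i)" by (rule power_diff_sumr2)
  have "int p dvd int p ^ e" using assms(2) by (simp add: dvd_power)
  then have ab: "[a = b] (mod int p)" using assms(3) dvd_trans cong_iff_dvd_diff by blast
  have "[(\<Sum>i<p. b ^ (p - Suc i) * a ^ i) = (\<Sum>i<p. b ^ (p - Suc i) * b ^ i)] (mod int p)"
    by (intro cong_sum cong_mult cong_refl cong_pow ab)
  also have "(\<Sum>i<p. b ^ (p - Suc i) * b ^ i) = (\<Sum>i<p. b ^ (p - 1))"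
    by (intro sum.cong refl) (simp add: power_add[symmetric])
  also have "\<dots> = int p * b ^ (p - 1)" by simp
  finally have "int p dvd (\<Sum>i<p. b ^ (p - Suc i) * a ^ i)"
    by (simp add: cong_dvd_iff)
  then have "int p ^ e * int p dvd (a - b) * (\<Sum>i<p. b ^ (p - Suc i) * a ^ i)"
    using assms(3) mult_dvd_mono by blast
  then show ?thesis using \<open>a ^ p - b ^ p = _\<close> by (simp add: mult.commute)
qed


definition cardR :: "nat \<Rightarrow> nat \<Rightarrow> (nat \<Rightarrow> int) \<Rightarrow> int" where
  "cardR p k x = (\<Sum>i\<le>k. x i * int p ^ (k - i))"

definition CI :: "nat \<Rightarrow> nat \<Rightarrow> int \<Rightarrow> (nat \<Rightarrow> int) set" where
  "CI p k d = {x \<in> carrier_R k. d dvd cardR p k x}"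

lemma card_mul: "cardR p k (mulR p k x y) = cardR p k x * cardR p k y"
proof -
  have "cardR p k (mulR p k x y) = (\<Sum>m\<le>k. \<Sum>i\<le>k. \<Sum>j\<le>k.
      if min i j = m then x i * y j * int p ^ (k - max i j) * int p ^ (k - m) else 0)"
    unfolding cardR_def mulR_def sum_distrib_right by (intro sum.cong refl) simp
  also have "\<dots> = (\<Sum>i\<le>k. \<Sum>m\<le>k. \<Sum>j\<le>k.
      if min i j = m then x i * y j * int p ^ (k - max i j) * int p ^ (k - m) else 0)"
    by (rule sum.swap)
  also have "\<dots> = (\<Sum>i\<le>k. \<Sum>j\<le>k. \<Sum>m\<le>k.
      if min i j = m then x i * y j * int p ^ (k - max i j) * int p ^ (k - m) else 0)"
    by (intro sum.cong refl sum.swap)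
  also have "\<dots> = (\<Sum>i\<le>k. \<Sum>j\<le>k. x i * y j * int p ^ (k - max i j) * int p ^ (k - min i j))"
    by (intro sum.cong refl) (auto simp: sum.delta)
  also have "\<dots> = (\<Sum>i\<le>k. \<Sum>j\<le>k. (x i * int p ^ (k - i)) * (y j * int p ^ (k - j)))"
    by (intro sum.cong refl) (auto simp: min_def max_def algebra_simps)
  also have "\<dots> = cardR p k x * cardR p k y"
    by (simp add: cardR_def sum_product)
  finally show ?thesis .
qed

lemma mulR_const:
  assumes "v \<in> carrier_R k"
  shows "mulR p k (constR k c) v = (\<lambda>m. c * v m)"
proof
  fix m
  have "mulR p k (constR k c) v m = (\<Sum>i<Suc k. \<Sum>j\<le>k.
      if min i j = m then constR k c i * v j * int p ^ (k - max i j) else 0)"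
    unfolding mulR_def lessThan_Suc_atMost ..
  also have "\<dots> = (\<Sum>j\<le>k. if min k j = m then c * v j * int p ^ (k - max k j) else 0)
      + (\<Sum>i<k. \<Sum>j\<le>k. if min i j = m then constR k c i * v j * int p ^ (k - max i j) else 0)"
    by (simp add: constR_def)
  also have "(\<Sum>i<k. \<Sum>j\<le>k. if min i j = m then constR k c i * v j * int p ^ (k - max i j) else 0) = 0"
    by (intro sum.neutral ballI) (simp add: constR_def)
  also have "(\<Sum>j\<le>k. if min k j = m then c * v j * int p ^ (k - max k j) else 0)
      = (\<Sum>j\<le>k. if j = m then c * v j else 0)"
    by (intro sum.cong refl) (auto simp: min_def max_def)
  also have "\<dots> = c * v m"
    using assms by (simp add: sum.delta' carrier_R_def)
  finally show "mulR p k (constR k c) v m = c * v m" by simp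
qed

lemma mulR_carrier: "mulR p k x y \<in> carrier_R k"
  unfolding carrier_R_def mulR_def by (auto intro!: sum.neutral)

lemma CI_ideal: "is_idealR p k (CI p k d)"
proof -
  have "addR x y \<in> CI p k d" if "x \<in> CI p k d" "y \<in> CI p k d" for x y
    using that unfolding CI_def carrier_R_def cardR_def addR_def
    by (simp add: distrib_right sum.distrib)
  moreover have "mulR p k y x \<in> CI p k d" if "x \<in> CI p k d" for x y
    using that mulR_carrier card_mul unfolding CI_def by simp
  ultimately show ?thesis unfolding is_idealR_def
    by (auto simp: CI_def carrier_R_def cardR_def)
qed


lemma resX_card:
  assumes "i \<le> Suc k"
  shows "(\<Sum>m\<le>k. resX p (Suc k) k i m * int p ^ (k - m)) = int p ^ (Suc k - i)"
proof (cases "i \<le> k")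
  case True
  have "(\<Sum>m\<le>k. resX p (Suc k) k i m * int p ^ (k - m))
      = (\<Sum>m\<le>k. if m = i then int p * int p ^ (k - m) else 0)"
    using True by (intro sum.cong refl) (auto simp: resX_def basisX_def)
  also have "\<dots> = int p * int p ^ (k - i)" using True by (simp add: sum.delta)
  also have "\<dots> = int p ^ (Suc k - i)" using True by (simp add: Suc_diff_le)
  finally show ?thesis .
next
  case False
  then have i: "i = Suc k" using assms by simp
  have "(\<Sum>m\<le>k. resX p (Suc k) k i m * int p ^ (k - m))
      = (\<Sum>m\<le>k. if m = k then 1 else 0)"
    using i by (intro sum.cong refl) (auto simp: resX_def constR_def)
  also have "\<dots> = 1" by simp
  finally show ?thesis using i by simp
qed

lemma card_res: "cardR p k (resR p (Suc k) k x) = cardR p (Suc k) x"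
proof -
  have "cardR p k (resR p (Suc k) k x)
      = (\<Sum>m\<le>k. \<Sum>i\<le>Suc k. x i * (resX p (Suc k) k i m * int p ^ (k - m)))"
    unfolding cardR_def resR_def sum_distrib_right by (simp add: mult.assoc)
  also have "\<dots> = (\<Sum>i\<le>Suc k. \<Sum>m\<le>k. x i * (resX p (Suc k) k i m * int p ^ (k - m)))"
    by (rule sum.swap)
  also have "\<dots> = (\<Sum>i\<le>Suc k. x i * int p ^ (Suc k - i))"
    by (intro sum.cong refl) (simp add: sum_distrib_left[symmetric] resX_card)
  finally show ?thesis unfolding cardR_def .
qed

lemma res_carrier: "resR p (Suc k) k x \<in> carrier_R k"
  unfolding carrier_R_def resR_def
  by (auto intro!: sum.neutral simp: resX_def basisX_def constR_def)

lemma Lop_CI: "Lop p (Suc k) (CI p k d) = CI p (Suc k) d"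
  unfolding Lop_def CI_def using res_carrier card_res by auto

lemma card_ind: "cardR p (Suc k) (indR k (Suc k) x) = int p * cardR p k x"
proof -
  have "cardR p (Suc k) (indR k (Suc k) x) = (\<Sum>m\<le>k. x m * int p ^ (Suc k - m))"
    unfolding cardR_def indR_def by (simp add: sum.atMost_Suc)
  also have "\<dots> = (\<Sum>m\<le>k. int p * (x m * int p ^ (k - m)))"
    by (intro sum.cong refl) (simp add: Suc_diff_le)
  finally show ?thesis unfolding cardR_def by (simp add: sum_distrib_left)
qed

lemma ind_carrier: "indR k (Suc k) x \<in> carrier_R (Suc k)"
  unfolding carrier_R_def indR_def by auto

lemma jnd_carrier: "jndR p k (Suc k) x \<in> carrier_R (Suc k)"
  unfolding carrier_R_def jndR_def by auto

lemma card_jnd: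
  assumes "prime p"
  shows "cardR p (Suc k) (jndR p k (Suc k) x) = cardR p k x ^ p"
proof -
  define A where "A m = (\<Sum>s\<in>{m..k}. x s * int p ^ (k - s))" for m
  have Adiff: "A m - A (Suc m) = x m * int p ^ (k - m)" if "m \<le> k" for m
    unfolding A_def using that by (simp add: sum.atLeast_Suc_atMost)
  have Ak: "A k = x k" unfolding A_def by simp
  have A0: "A 0 = cardR p k x" unfolding A_def cardR_def by (simp add: atLeast0AtMost)
  have low: "jndR p k (Suc k) x m * int p ^ (Suc k - m) = A m ^ p - A (Suc m) ^ p" if "m < k" for m
  proof -
    have "jndR p k (Suc k) x m = (A m ^ p - A (Suc m) ^ p) div int p ^ (Suc k - m)"
      using that unfolding jndR_def A_def by simp
    moreover have "int p ^ (Suc (k - m)) dvd A m ^ p - A (Suc m) ^ p"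
      using that by (intro pow_p_lift assms) (simp_all add: Adiff)
    ultimately show ?thesis using that by (simp add: Suc_diff_le)
  qed
  have midv: "jndR p k (Suc k) x k = (x k ^ p - x k) div int p"
    unfolding jndR_def by simp
  have mid: "jndR p k (Suc k) x k * int p = x k ^ p - x k"
    unfolding midv using fermat_int[OF assms] by simp
  have top: "jndR p k (Suc k) x (Suc k) = x k" unfolding jndR_def by simp
  have "cardR p (Suc k) (jndR p k (Suc k) x)
      = (\<Sum>m<k. jndR p k (Suc k) x m * int p ^ (Suc k - m)) + jndR p k (Suc k) x k * int p
        + jndR p k (Suc k) x (Suc k)"
    unfolding cardR_def by (simp add: sum.atMost_Suc lessThan_Suc_atMost[symmetric])
  also have "(\<Sum>m<k. jndR p k (Suc k) x m * int p ^ (Suc k - m)) = (\<Sum>m<k. A m ^ p - A (Suc m) ^ p)"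
    by (intro sum.cong refl) (simp add: low)
  also have "\<dots> = A 0 ^ p - A k ^ p" by (rule sum_lessThan_telescope')
  finally show ?thesis using mid top Ak A0 by simp
qed


lemma card_diff: "cardR p k (\<lambda>m. a m - b m) = cardR p k a - cardR p k b"
  unfolding cardR_def by (simp add: left_diff_distrib sum_subtractf)

lemma card_scale: "cardR p k (\<lambda>m. t * a m) = t * cardR p k a"
  unfolding cardR_def by (simp add: sum_distrib_left mult.assoc)

lemma card_top: "cardR p (Suc k) y = y (Suc k) + int p * (\<Sum>m\<le>k. y m * int p ^ (k - m))"
  unfolding cardR_def
  by (simp add: sum.atMost_Suc sum_distrib_left Suc_diff_le mult.assoc mult.left_commute)

lemma exists_top_p:
  assumes "j \<ge> 1" "k = 0 \<Longrightarrow> j = 1"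
  shows "\<exists>x0 \<in> CI p k (int p ^ j). x0 k = int p"
proof (cases k)
  case 0
  then have "constR 0 (int p) \<in> CI p k (int p ^ j)"
    using assms by (simp add: CI_def carrier_R_def constR_def cardR_def)
  then show ?thesis using 0 by (intro bexI[of _ "constR 0 (int p)"]) (auto simp: constR_def)
next
  case (Suc k')
  define x0 where "x0 = (\<lambda>m::nat. if m = Suc k' then int p else if m = k' then -1 else (0::int))"
  have "cardR p (Suc k') x0 = 0"
    unfolding cardR_def x0_def
    by (simp add: sum.atMost_Suc atMost_Suc lessThan_Suc_atMost[symmetric] sum.neutral)
  then have "x0 \<in> CI p k (int p ^ j)" using Suc by (auto simp: CI_def carrier_R_def x0_def)
  then show ?thesis using Suc by (intro bexI[of _ x0]) (auto simp: x0_def)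
qed

lemma Sop_CI:
  assumes p: "prime p" and j: "j \<ge> 1" and k0: "k = 0 \<Longrightarrow> j = 1"
  shows "Sop p (Suc k) (CI p k (int p ^ j)) = CI p (Suc k) (int p ^ Suc j)"
proof -
  let ?G = "indR k (Suc k) ` CI p k (int p ^ j) \<union> jndR p k (Suc k) ` CI p k (int p ^ j)"
  have p2: "p \<ge> 2" using p prime_ge_2_nat by blast
  have Gsub: "?G \<subseteq> CI p (Suc k) (int p ^ Suc j)"
  proof
    fix g assume "g \<in> ?G"
    then obtain x where x: "x \<in> CI p k (int p ^ j)" and
      g: "g = indR k (Suc k) x \<or> g = jndR p k (Suc k) x" by blast
    from x have d: "int p ^ j dvd cardR p k x" by (simp add: CI_def)
    show "g \<in> CI p (Suc k) (int p ^ Suc j)"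
      using g
    proof
      assume "g = indR k (Suc k) x"
      then show ?thesis using d ind_carrier card_ind by (simp add: CI_def mult_dvd_mono)
    next
      assume gj: "g = jndR p k (Suc k) x"
      have "(int p ^ j) ^ p dvd cardR p k x ^ p" using d by (rule dvd_power_same)
      moreover have "int p ^ Suc j dvd (int p ^ j) ^ p"
      proof -
        have "j * 2 \<le> j * p" using p2 by simp
        then have "Suc j \<le> j * p" using j by linarith
        then show ?thesis using le_imp_power_dvd[of "Suc j" "j*p" "int p"]
          by (simp add: power_mult)
      qed
      ultimately show ?thesis using gj jnd_carrier card_jnd[OF p] dvd_trans
        by (simp add: CI_def) blast
    qed
  qed
  have sub1: "Sop p (Suc k) (CI p k (int p ^ j)) \<subseteq> CI p (Suc k) (int p ^ Suc j)"
    unfolding Sop_def gen_idealR_def using CI_ideal Gsub by auto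
  have sub2: "CI p (Suc k) (int p ^ Suc j) \<subseteq> Sop p (Suc k) (CI p k (int p ^ j))"
  proof
    fix y assume y: "y \<in> CI p (Suc k) (int p ^ Suc j)"
    have ycar: "y \<in> carrier_R (Suc k)" and yd: "int p ^ Suc j dvd cardR p (Suc k) y"
      using y by (auto simp: CI_def)
    have "int p dvd cardR p (Suc k) y" using yd by (simp add: dvd_mult_left)
    then have "int p dvd y (Suc k)" unfolding card_top
      by (metis dvd_add_right_iff dvd_triv_left add.commute)
    then obtain t where t: "y (Suc k) = int p * t" by blast
    obtain x0 where x0: "x0 \<in> CI p k (int p ^ j)" and x0k: "x0 k = int p"
      using exists_top_p[OF j k0] by blast
    define w where "w = (\<lambda>m. t * jndR p k (Suc k) x0 m)"
    define v where "v = (\<lambda>m. y m - w m)"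
    define z where "z = (\<lambda>m. if m \<le> k then v m else 0)"
    have wcar: "w \<in> carrier_R (Suc k)" using jnd_carrier[of p k x0]
      by (simp add: w_def carrier_R_def)
    have vcar: "v \<in> carrier_R (Suc k)" using wcar ycar by (simp add: v_def carrier_R_def)
    have vtop: "v (Suc k) = 0" using t x0k
      by (simp add: v_def w_def jndR_def)
    have indz: "indR k (Suc k) z = v"
    proof
      fix m show "indR k (Suc k) z m = v m"
        using vcar vtop by (cases "m \<le> k"; cases "m = Suc k") (auto simp: indR_def z_def carrier_R_def)
    qed
    have "jndR p k (Suc k) x0 \<in> CI p (Suc k) (int p ^ Suc j)" using Gsub x0 by blast
    then have "int p ^ Suc j dvd cardR p (Suc k) w"
      unfolding w_def card_scale by (simp add: CI_def)
    then have "int p ^ Suc j dvd cardR p (Suc k) v"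
      unfolding v_def card_diff using yd by simp
    then have "int p * int p ^ j dvd int p * cardR p k z"
      using card_ind[of p k z] indz by simp
    then have "int p ^ j dvd cardR p k z" using p2 by simp
    moreover have "z \<in> carrier_R k" by (simp add: z_def carrier_R_def)
    ultimately have zI: "z \<in> CI p k (int p ^ j)" by (simp add: CI_def)
    have "y \<in> gen_idealR p (Suc k) ?G"
      unfolding gen_idealR_def
    proof (rule InterI)
      fix J assume "J \<in> {I. is_idealR p (Suc k) I \<and> ?G \<subseteq> I}"
      then have J: "is_idealR p (Suc k) J" and GJ: "?G \<subseteq> J" by auto
      have vJ: "v \<in> J" using GJ zI indz by blast
      have "jndR p k (Suc k) x0 \<in> J" using GJ x0 by blast
      moreover have "constR (Suc k) t \<in> carrier_R (Suc k)" by (simp add: carrier_R_def constR_def)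
      ultimately have "mulR p (Suc k) (constR (Suc k) t) (jndR p k (Suc k) x0) \<in> J"
        using J unfolding is_idealR_def by blast
      then have wJ: "w \<in> J" using mulR_const[OF jnd_carrier] by (simp add: w_def)
      have "addR w v \<in> J" using J wJ vJ unfolding is_idealR_def by blast
      moreover have "addR w v = y" by (simp add: addR_def v_def)
      ultimately show "y \<in> J" by simp
    qed
    then show "y \<in> Sop p (Suc k) (CI p k (int p ^ j))" by (simp add: Sop_def)
  qed
  show ?thesis using sub1 sub2 by blast
qed


lemma pideal_CI: "pideal p = CI p 0 (int p)"
proof
  show "pideal p \<subseteq> CI p 0 (int p)"
    by (auto simp: pideal_def CI_def carrier_R_def constR_def cardR_def)
  show "CI p 0 (int p) \<subseteq> pideal p"
  proof
    fix x assume x: "x \<in> CI p 0 (int p)"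
    then obtain c where c: "x 0 = int p * c" by (auto simp: CI_def cardR_def)
    have "x = constR 0 (int p * c)"
      using x c by (auto simp: CI_def carrier_R_def constR_def)
    then show "x \<in> pideal p" by (auto simp: pideal_def)
  qed
qed

lemma word_CI:
  assumes p: "prime p"
  shows "word_ideal p w = CI p (length w) (int p ^ Suc (length (filter (\<lambda>op1. op1 = OpS) w)))"
proof (induction w)
  case Nil
  then show ?case by (simp add: pideal_CI)
next
  case (Cons op1 w)
  show ?case
  proof (cases op1)
    case OpS
    have "word_ideal p (op1 # w) = Sop p (Suc (length w))
        (CI p (length w) (int p ^ Suc (length (filter (\<lambda>op1. op1 = OpS) w))))"
      using Cons OpS by (simp add: apply_op_def)
    also have "\<dots> = CI p (Suc (length w)) (int p ^ Suc (Suc (length (filter (\<lambda>op1. op1 = OpS) w))))"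
      by (rule Sop_CI[OF p]) auto
    finally show ?thesis using OpS by simp
  next
    case OpL
    then show ?thesis using Cons by (simp add: apply_op_def Lop_CI)
  qed
qed

lemma card_basis:
  assumes "i \<le> l" shows "cardR p l (basisX l i) = int p ^ (l - i)"
proof -
  have "cardR p l (basisX l i) = (\<Sum>m\<le>l. if m = i then int p ^ (l - i) else 0)"
    unfolding cardR_def basisX_def using assms by (intro sum.cong refl) auto
  then show ?thesis using assms by simp
qed

lemma card_const: "cardR p l (constR l c) = c"
proof -
  have "cardR p l (constR l c) = (\<Sum>m\<le>l. if m = l then c else 0)"
    unfolding cardR_def constR_def by (intro sum.cong refl) auto
  then show ?thesis by simp
qed

lemma J_CI: "J_ideal p l 0 d = CI p l d"
proof (cases "l = 0")
  case True
  show ?thesis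
  proof
    show "J_ideal p l 0 d \<subseteq> CI p l d"
      using True by (auto simp: J_ideal_def mulR_const CI_def carrier_R_def cardR_def)
    show "CI p l d \<subseteq> J_ideal p l 0 d"
    proof
      fix x assume x: "x \<in> CI p l d"
      then obtain c where c: "x 0 = d * c" using True by (auto simp: CI_def cardR_def)
      have cc: "constR 0 c \<in> carrier_R 0" by (simp add: carrier_R_def constR_def)
      have mc: "mulR p 0 (constR 0 d) (constR 0 c) = (\<lambda>m. d * constR 0 c m)"
        by (rule mulR_const[OF cc])
      have "x = mulR p 0 (constR 0 d) (constR 0 c)"
        unfolding mc using x c True by (auto simp: CI_def carrier_R_def constR_def)
      then show "x \<in> J_ideal p l 0 d" using True cc by (auto simp: J_ideal_def)
    qed
  qed
next
  case False
  let ?G = "insert (constR l d) {F_el p l i | i. 0 \<le> i \<and> i \<le> l - 1}"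
  have JG: "J_ideal p l 0 d = gen_idealR p l ?G" using False by (simp add: J_ideal_def)
  have Fcar: "F_el p l i \<in> carrier_R l" for i
    by (simp add: F_el_def carrier_R_def basisX_def constR_def)
  have ccar: "constR l c \<in> carrier_R l" for c by (simp add: carrier_R_def constR_def)
  have Fcard: "i < l \<Longrightarrow> cardR p l (F_el p l i) = 0" for i
    unfolding F_el_def card_diff by (simp add: card_basis card_const)
  have Gsub: "?G \<subseteq> CI p l d"
    using False Fcar Fcard ccar by (auto simp: CI_def card_const)
  have sub1: "gen_idealR p l ?G \<subseteq> CI p l d"
    unfolding gen_idealR_def using CI_ideal Gsub by auto
  have sub2: "CI p l d \<subseteq> gen_idealR p l ?G"
    unfolding gen_idealR_def
  proof (intro subsetI InterI)
    fix y J assume y: "y \<in> CI p l d" and "J \<in> {I. is_idealR p l I \<and> ?G \<subseteq> I}"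
    then have J: "is_idealR p l J" and GJ: "?G \<subseteq> J" by auto
    have mulJ: "mulR p l u x \<in> J" if "x \<in> J" "u \<in> carrier_R l" for x u
      using J that unfolding is_idealR_def by blast
    have addJ: "addR x u \<in> J" if "x \<in> J" "u \<in> J" for x u
      using J that unfolding is_idealR_def by blast
    have P: "\<forall>y \<in> carrier_R l. (\<forall>i. n \<le> i \<and> i < l \<longrightarrow> y i = 0) \<longrightarrow> d dvd cardR p l y \<longrightarrow> y \<in> J"
      for n
    proof (induction n)
      case 0
      show ?case
      proof (intro ballI impI)
        fix y assume ycar: "y \<in> carrier_R l" and z: "\<forall>i. 0 \<le> i \<and> i < l \<longrightarrow> y i = 0"
          and dv: "d dvd cardR p l y"
        have yc: "y = constR l (y l)"
        proof
          fix m show "y m = constR l (y l) m"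
            using ycar z by (cases "m < l"; cases "m = l") (auto simp: constR_def carrier_R_def)
        qed
        then have "d dvd y l" using dv card_const by metis
        then obtain c where c: "y l = d * c" by blast
        have "constR l d \<in> J" using GJ by blast
        then have "mulR p l (constR l c) (constR l d) \<in> J" using mulJ ccar by blast
        moreover have "mulR p l (constR l c) (constR l d) = y"
          unfolding mulR_const[OF ccar] by (subst yc) (auto simp: constR_def c)
        ultimately show "y \<in> J" by simp
      qed
    next
      case (Suc n)
      show ?case
      proof (intro ballI impI)
        fix y assume ycar: "y \<in> carrier_R l" and z: "\<forall>i. Suc n \<le> i \<and> i < l \<longrightarrow> y i = 0"
          and dv: "d dvd cardR p l y"
        show "y \<in> J"
        proof (cases "n < l")
          case False
          then show ?thesis using Suc.IH ycar dv by auto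
        next
          case True
          define y' where "y' = (\<lambda>m. y m - y n * F_el p l n m)"
          have y'car: "y' \<in> carrier_R l" using ycar Fcar[of n]
            by (simp add: y'_def carrier_R_def)
          have "\<forall>i. n \<le> i \<and> i < l \<longrightarrow> y' i = 0"
          proof (intro allI impI)
            fix i assume i: "n \<le> i \<and> i < l"
            show "y' i = 0"
            proof (cases "i = n")
              case True then show ?thesis using i
                by (simp add: y'_def F_el_def basisX_def constR_def)
            next
              case False then show ?thesis using i z
                by (simp add: y'_def F_el_def basisX_def constR_def)
            qed
          qed
          moreover have "cardR p l y' = cardR p l y"
            unfolding y'_def card_diff card_scale using Fcard True by simp
          ultimately have y'J: "y' \<in> J" using Suc.IH y'car dv by simp
          have "F_el p l n \<in> J" using GJ True by force
          then have "mulR p l (constR l (y n)) (F_el p l n) \<in> J" using mulJ ccar by blast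
          then have "addR y' (mulR p l (constR l (y n)) (F_el p l n)) \<in> J" using addJ y'J by blast
          moreover have "addR y' (mulR p l (constR l (y n)) (F_el p l n)) = y"
            by (simp add: addR_def mulR_const[OF Fcar] y'_def)
          ultimately show ?thesis by simp
        qed
      qed
    qed
    show "y \<in> J" using P[of l] y by (simp add: CI_def)
  qed
  show ?thesis using JG sub1 sub2 by blast
qed

lemma SL_word_props:
  "length a = length b \<Longrightarrow> length (SL_word a b) = sum_list a + sum_list b
     \<and> length (filter (\<lambda>op1. op1 = OpS) (SL_word a b)) = sum_list a"
proof (induction a arbitrary: b)
  case Nil then show ?case by (simp add: SL_word_def)
next
  case (Cons x a)
  then obtain y b' where b: "b = y # b'" and l: "length a = length b'" by (cases b) auto
  have "SL_word (x # a) b = replicate x OpS @ replicate y OpL @ SL_word a b'"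
    by (simp add: SL_word_def b)
  then show ?case using Cons.IH[OF l] b by (simp add: filter_replicate)
qed

theorem proposition6:
  fixes p r l s k :: nat and a b :: "nat list"
  assumes "prime p" and "l \<le> r"
    and "length a = s" and "length b = s"
    and "sum_list a + sum_list b = l"
    and "k = sum_list a"
  shows "word_ideal p (SL_word a b) = word_ideal p (replicate k OpS @ replicate (l - k) OpL)
       \<and> word_ideal p (replicate k OpS @ replicate (l - k) OpL)
           = word_ideal p (replicate (l - k) OpL @ replicate k OpS)
       \<and> word_ideal p (replicate (l - k) OpL @ replicate k OpS)
           = J_ideal p l 0 (int p ^ (k + 1))"
proof -
  have kl: "k \<le> l" using assms by simp
  have pr: "length a = length b" using assms by simp
  show ?thesis
    using SL_word_props[OF pr] assms kl
    by (simp add: word_CI[OF assms(1)] J_CI filter_replicate)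
qed

end
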